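(* Let $n\ge3$ and let $W$ be a real $2$-plane in $\mathbb{H}^n$ which is not contained in a quaternion line. Then the orbit $\mathbb{G}\equiv\mathrm{Sp}(n)\cdot\mathrm{Sp}(1)\cdot W$ has the transitivity property.
   Context: $\mathbb{H}^n=\mathbb{R}^{4n}$; $\mathrm{Sp}(n)$ acts by quaternion-linear isometries and $\mathrm{Sp}(1)$ by unit quaternion scalar multiplication. A set $\mathbb{G}$ of real planes has the transitivity property if for any two vectors $x,y\in\mathbb{H}^n$ there exist $W_1,\dots,W_k\in\mathbb{G}$ with $x\in W_1$, $y\in W_k$ and $\dim_{\mathbb{R}}(W_i\cap W_{i+1})>0$ for $i=1,\dots,k-1$. *)

theory Defs
  imports "HOL-Analysis.Analysis"
begin

text \<open>Quaternions are modelled as real^4 with components q$1 (real part), q$2, q$3, q$4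
  (coefficients of i, j, k).  The quaternion space H^n is real^4^'n, which as a real
  Euclidean space is R^(4n) with its standard inner product.\<close>

definition qmul :: "real^4 \<Rightarrow> real^4 \<Rightarrow> real^4" where
  "qmul p q = (\<chi> i.
     if i = 1 then p$1*q$1 - p$2*q$2 - p$3*q$3 - p$4*q$4
     else if i = 2 then p$1*q$2 + p$2*q$1 + p$3*q$4 - p$4*q$3
     else if i = 3 then p$1*q$3 - p$2*q$4 + p$3*q$1 + p$4*q$2
     else p$1*q$4 + p$2*q$3 - p$3*q$2 + p$4*q$1)"

text \<open>Left scalar multiplication of a vector in H^n by a quaternion (the H-module structure),
  and right multiplication by a quaternion (the Sp(1) action).\<close>

definition hlmul :: "real^4 \<Rightarrow> real^4^'n \<Rightarrow> real^4^'n" where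
  "hlmul l x = (\<chi> i. qmul l (x$i))"

definition hrmul :: "real^4^'n \<Rightarrow> real^4 \<Rightarrow> real^4^'n" where
  "hrmul x q = (\<chi> i. qmul (x$i) q)"

definition Sp :: "(real^4^'n \<Rightarrow> real^4^'n) set" where
  "Sp = {f. linear f \<and> (\<forall>l x. f (hlmul l x) = hlmul l (f x)) \<and> (\<forall>x. norm (f x) = norm x)}"

definition orbit_SpSp1 :: "(real^4^'n) set \<Rightarrow> (real^4^'n) set set" where
  "orbit_SpSp1 W = {f ` ((\<lambda>x. hrmul x q) ` W) | f q. f \<in> Sp \<and> norm q = 1}"

definition real_plane :: "(real^4^'n) set \<Rightarrow> bool" where
  "real_plane W \<longleftrightarrow> subspace W \<and> dim W = 2"

definition quaternion_line :: "(real^4^'n) set \<Rightarrow> bool" where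
  "quaternion_line L \<longleftrightarrow> (\<exists>v. v \<noteq> 0 \<and> L = {hlmul l v | l. True})"

definition transitivity_property :: "(real^4^'n) set set \<Rightarrow> bool" where
  "transitivity_property G \<longleftrightarrow>
     (\<forall>x y. \<exists>Ws. Ws \<noteq> [] \<and> set Ws \<subseteq> G \<and> x \<in> hd Ws \<and> y \<in> last Ws \<and>
        (\<forall>i. Suc i < length Ws \<longrightarrow> dim (Ws!i \<inter> Ws!Suc i) > 0))"

end

theory Submission
  imports Defs
begin

definition qone :: "real^4" where "qone = (\<chi> i. if i = 1 then 1 else 0)"
definition qconj :: "real^4 \<Rightarrow> real^4" where "qconj q = (\<chi> i. if i = 1 then q$1 else - q$i)"

lemma qmul_comp:
  "qmul p q $ 1 = p$1*q$1 - p$2*q$2 - p$3*q$3 - p$4*q$4"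
  "qmul p q $ 2 = p$1*q$2 + p$2*q$1 + p$3*q$4 - p$4*q$3"
  "qmul p q $ 3 = p$1*q$3 - p$2*q$4 + p$3*q$1 + p$4*q$2"
  "qmul p q $ 4 = p$1*q$4 + p$2*q$3 - p$3*q$2 + p$4*q$1"
  by (simp_all add: qmul_def)

lemma qone_comp [simp]: "qone$1 = 1" "qone$2 = 0" "qone$3 = 0" "qone$4 = 0"
  by (simp_all add: qone_def)
lemma qconj_comp [simp]: "qconj q$1 = q$1" "qconj q$2 = - q$2" "qconj q$3 = - q$3" "qconj q$4 = - q$4"
  by (simp_all add: qconj_def)

lemma vec4_eq: "(a::real^4) = b \<longleftrightarrow> a$1 = b$1 \<and> a$2 = b$2 \<and> a$3 = b$3 \<and> a$4 = b$4"
  by (auto simp: vec_eq_iff forall_4)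

lemma qmul_assoc: "qmul (qmul a b) c = qmul a (qmul b c)"
  by (simp add: vec4_eq qmul_comp algebra_simps)

lemma qmul_add_left: "qmul (a + b) c = qmul a c + qmul b c"
  by (simp add: vec4_eq qmul_comp algebra_simps)
lemma qmul_add_right: "qmul c (a + b) = qmul c a + qmul c b"
  by (simp add: vec4_eq qmul_comp algebra_simps)
lemma qmul_diff_left: "qmul (a - b) c = qmul a c - qmul b c"
  by (simp add: vec4_eq qmul_comp algebra_simps)
lemma qmul_diff_right: "qmul c (a - b) = qmul c a - qmul c b"
  by (simp add: vec4_eq qmul_comp algebra_simps)
lemma qmul_scaleR_left: "qmul (r *\<^sub>R a) c = r *\<^sub>R qmul a c"
  by (simp add: vec4_eq qmul_comp algebra_simps)
lemma qmul_scaleR_right: "qmul c (r *\<^sub>R a) = r *\<^sub>R qmul c a"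
  by (simp add: vec4_eq qmul_comp algebra_simps)
lemma qmul_zero_left [simp]: "qmul 0 c = 0"
  by (simp add: vec4_eq qmul_comp)
lemma qmul_zero_right [simp]: "qmul c 0 = 0"
  by (simp add: vec4_eq qmul_comp)
lemma qmul_qone_left [simp]: "qmul qone c = c"
  by (simp add: vec4_eq qmul_comp)
lemma qmul_qone_right [simp]: "qmul c qone = c"
  by (simp add: vec4_eq qmul_comp)
lemma qconj_qmul: "qconj (qmul a b) = qmul (qconj b) (qconj a)"
  by (simp add: vec4_eq qmul_comp algebra_simps)
lemma qconj_qconj [simp]: "qconj (qconj a) = a"
  unfolding vec4_eq by simp
lemma qconj_add: "qconj (a + b) = qconj a + qconj b"
  unfolding vec4_eq by simp
lemma qconj_diff: "qconj (a - b) = qconj a - qconj b"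
  unfolding vec4_eq by simp
lemma qconj_scaleR: "qconj (r *\<^sub>R a) = r *\<^sub>R qconj a"
  unfolding vec4_eq by simp
lemma qconj_zero [simp]: "qconj 0 = 0"
  unfolding vec4_eq by simp
lemma qconj_qone [simp]: "qconj qone = qone"
  unfolding vec4_eq by simp

lemma norm4_sq: "(norm (a::real^4))^2 = a$1^2 + a$2^2 + a$3^2 + a$4^2"
  by (simp add: norm_vec_def L2_set_def sum_4)
lemma inner4: "(a::real^4) \<bullet> b = a$1*b$1 + a$2*b$2 + a$3*b$3 + a$4*b$4"
  by (simp add: inner_vec_def sum_4)

lemma qmul_qconj_self: "qmul a (qconj a) = (norm a)^2 *\<^sub>R qone"
  unfolding vec4_eq qmul_comp norm4_sq by (simp add: power2_eq_square)
lemma qmul_qconj_self': "qmul (qconj a) a = (norm a)^2 *\<^sub>R qone"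
  unfolding vec4_eq qmul_comp norm4_sq by (simp add: power2_eq_square)

lemma norm_qmul: "norm (qmul a b) = norm a * norm b"
proof -
  have "(norm (qmul a b))^2 = (norm a * norm b)^2"
    unfolding power_mult_distrib norm4_sq qmul_comp by (simp add: power2_eq_square algebra_simps)
  then show ?thesis by (simp add: power2_eq_iff_nonneg)
qed
lemma norm_qconj [simp]: "norm (qconj a) = norm a"
proof -
  have "(norm (qconj a))^2 = (norm a)^2" unfolding norm4_sq by simp
  then show ?thesis by (simp add: power2_eq_iff_nonneg)
qed
lemma norm_qone [simp]: "norm qone = 1"
proof -
  have "(norm qone)^2 = 1^2" unfolding norm4_sq by simp
  then show ?thesis using power2_eq_iff_nonneg[of "norm qone" 1] by simp
qed

lemma qmul_sum_left: "qmul (sum f S) c = sum (\<lambda>i. qmul (f i) c) S"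
  by (induct S rule: infinite_finite_induct) (simp_all add: qmul_add_left)
lemma qmul_sum_right: "qmul c (sum f S) = sum (\<lambda>i. qmul c (f i)) S"
  by (induct S rule: infinite_finite_induct) (simp_all add: qmul_add_right)
lemma qconj_sum: "qconj (sum f S) = sum (\<lambda>i. qconj (f i)) S"
  by (induct S rule: infinite_finite_induct) (simp_all add: qconj_add)

definition hip :: "real^4^'n \<Rightarrow> real^4^'n \<Rightarrow> real^4" where
  "hip x y = (\<Sum>i\<in>UNIV. qmul (x$i) (qconj (y$i)))"

lemma hlmul_comp [simp]: "hlmul l x $ i = qmul l (x$i)"
  by (simp add: hlmul_def)

lemma hip_add_left: "hip (x + y) z = hip x z + hip y z"
  by (simp add: hip_def qmul_add_left sum.distrib)
lemma hip_add_right: "hip z (x + y) = hip z x + hip z y"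
  by (simp add: hip_def qmul_add_right qconj_add sum.distrib)
lemma hip_diff_left: "hip (x - y) z = hip x z - hip y z"
  by (simp add: hip_def qmul_diff_left sum_subtractf)
lemma hip_diff_right: "hip z (x - y) = hip z x - hip z y"
  by (simp add: hip_def qmul_diff_right qconj_diff sum_subtractf)
lemma hip_scaleR_left: "hip (r *\<^sub>R x) y = r *\<^sub>R hip x y"
  by (simp add: hip_def qmul_scaleR_left scaleR_sum_right)
lemma hip_scaleR_right: "hip x (r *\<^sub>R y) = r *\<^sub>R hip x y"
  by (simp add: hip_def qmul_scaleR_right qconj_scaleR scaleR_sum_right)
lemma hip_zero_left [simp]: "hip 0 y = 0"
  by (simp add: hip_def)
lemma hip_zero_right [simp]: "hip x 0 = 0"
  by (simp add: hip_def)
lemma hip_hlmul_left: "hip (hlmul l x) y = qmul l (hip x y)"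
  by (simp add: hip_def qmul_assoc qmul_sum_right)
lemma hip_hlmul_right: "hip x (hlmul l y) = qmul (hip x y) (qconj l)"
  by (simp add: hip_def qmul_assoc qmul_sum_left qconj_qmul)
lemma hip_sym: "hip y x = qconj (hip x y)"
  by (simp add: hip_def qconj_sum qconj_qmul)

lemma inner_hip: "x \<bullet> y = hip x y $ 1"
  by (simp add: hip_def inner_vec_def sum_component inner4 qmul_comp sum_4)

lemma norm_sq_hip: "(norm x)^2 = hip x x $ 1"
  by (simp add: power2_norm_eq_inner inner_hip)

lemma hip_self: "hip x x = (norm x)^2 *\<^sub>R qone"
proof -
  have "hip x x = (\<Sum>i\<in>UNIV. (norm (x$i))^2) *\<^sub>R qone"
    by (simp add: hip_def qmul_qconj_self scaleR_sum_left)
  also have "(\<Sum>i\<in>UNIV. (norm (x$i))^2) = (norm x)^2"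
    by (simp add: norm_vec_def L2_set_def sum_nonneg)
  finally show ?thesis .
qed

lemma hlmul_assoc: "hlmul (qmul a b) x = hlmul a (hlmul b x)"
  by (simp add: vec_eq_iff qmul_assoc)
lemma hlmul_add_left: "hlmul (a + b) x = hlmul a x + hlmul b x"
  by (simp add: vec_eq_iff qmul_add_left)
lemma hlmul_add_right: "hlmul a (x + y) = hlmul a x + hlmul a y"
  by (simp add: vec_eq_iff qmul_add_right)
lemma hlmul_diff_left: "hlmul (a - b) x = hlmul a x - hlmul b x"
  by (simp add: vec_eq_iff qmul_diff_left)
lemma hlmul_diff_right: "hlmul a (x - y) = hlmul a x - hlmul a y"
  by (simp add: vec_eq_iff qmul_diff_right)
lemma hlmul_scaleR_left: "hlmul (r *\<^sub>R a) x = r *\<^sub>R hlmul a x"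
  by (simp add: vec_eq_iff qmul_scaleR_left)
lemma hlmul_scaleR_right: "hlmul a (r *\<^sub>R x) = r *\<^sub>R hlmul a x"
  by (simp add: vec_eq_iff qmul_scaleR_right)
lemma hlmul_qone [simp]: "hlmul qone x = x"
  by (simp add: vec_eq_iff)
lemma hlmul_zero_left [simp]: "hlmul 0 x = 0"
  by (simp add: vec_eq_iff)
lemma hlmul_zero_right [simp]: "hlmul a 0 = 0"
  by (simp add: vec_eq_iff)

lemma norm_hlmul: "norm (hlmul a x) = norm a * norm x"
proof -
  have "hip (hlmul a x) (hlmul a x) = qmul a (qmul (hip x x) (qconj a))"
    by (simp only: hip_hlmul_left hip_hlmul_right qmul_assoc)
  also have "\<dots> = ((norm x)^2 * (norm a)^2) *\<^sub>R qone"
    by (simp add: hip_self qmul_scaleR_left qmul_scaleR_right qmul_qconj_self)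
  finally have "(norm (hlmul a x))^2 = (norm a * norm x)^2"
    by (simp add: norm_sq_hip power_mult_distrib)
  then show ?thesis by (simp add: power2_eq_iff_nonneg)
qed

lemma Sp_iff: "f \<in> Sp \<longleftrightarrow> linear f \<and> (\<forall>l x. f (hlmul l x) = hlmul l (f x)) \<and> (\<forall>x. norm (f x) = norm x)"
  by (simp add: Sp_def)

lemma Sp_id: "id \<in> Sp"
proof -
  have "linear id" by (rule linearI) simp_all
  then show ?thesis by (simp add: Sp_iff)
qed

lemma Sp_comp: "f \<in> Sp \<Longrightarrow> g \<in> Sp \<Longrightarrow> f \<circ> g \<in> Sp"
  by (simp add: Sp_iff linear_compose)

lemma comp_via_re: "h $ k = qmul (qconj (axis k 1)) h $ 1"
  using exhaust_4[of k] by (auto simp add: qmul_comp axis_def)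

lemma hip_comp_inner: "hip x y $ k = hlmul (qconj (axis k 1)) x \<bullet> y"
  by (simp add: inner_hip hip_hlmul_left comp_via_re[of "hip x y" k])

lemma Sp_inner: "f \<in> Sp \<Longrightarrow> f x \<bullet> f y = x \<bullet> y"
  using orthogonal_transformation[of f] unfolding Sp_iff orthogonal_transformation_def by auto

lemma Sp_hip: "f \<in> Sp \<Longrightarrow> hip (f x) (f y) = hip x y"
proof -
  assume f: "f \<in> Sp"
  have "hip (f x) (f y) $ k = hip x y $ k" for k
  proof -
    have "hip (f x) (f y) $ k = f (hlmul (qconj (axis k 1)) x) \<bullet> f y"
      using f by (simp add: hip_comp_inner Sp_iff)
    also have "\<dots> = hip x y $ k" using f by (simp add: Sp_inner hip_comp_inner)
    finally show ?thesis .
  qed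
  then show ?thesis by (simp add: vec_eq_iff)
qed

lemma Sp_hlmul: "f \<in> Sp \<Longrightarrow> f (hlmul l x) = hlmul l (f x)"
  by (simp add: Sp_iff)
lemma Sp_linear: "f \<in> Sp \<Longrightarrow> linear f"
  by (simp add: Sp_iff)
lemma Sp_norm: "f \<in> Sp \<Longrightarrow> norm (f x) = norm x"
  by (simp add: Sp_iff)

definition Mv :: "real^4^'n \<Rightarrow> real^4 \<Rightarrow> real^4^'n \<Rightarrow> real^4^'n" where
  "Mv v c x = x + hlmul (qmul (hip x v) c) v"

lemma Mv_extra: "(qmul h (qconj (qmul h c)) + qmul (qmul h c) (qconj h) + qmul (qmul h c) (qconj (qmul h c)))$1
   = (h$1^2+h$2^2+h$3^2+h$4^2) * ((1+c$1)^2+c$2^2+c$3^2+c$4^2 - 1)"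
  by (simp add: qmul_comp power2_eq_square algebra_simps)

lemma Mv_Sp:
  assumes v: "norm v = 1" and c: "norm (qone + c) = 1"
  shows "Mv v c \<in> Sp"
proof -
  have lin: "linear (Mv v c)"
    by (rule linearI) (simp_all add: Mv_def hip_add_left hip_scaleR_left qmul_add_left
        qmul_scaleR_left hlmul_add_left hlmul_scaleR_left scaleR_add_right)
  have hl: "Mv v c (hlmul l x) = hlmul l (Mv v c x)" for l x
    by (simp add: Mv_def hip_hlmul_left qmul_assoc hlmul_assoc hlmul_add_right)
  have c1: "(1+c$1)^2+c$2^2+c$3^2+c$4^2 = 1"
    using c norm4_sq[of "qone + c"] by simp
  have nm: "norm (Mv v c x) = norm x" for x
  proof -
    define h where "h = hip x v"
    define a where "a = qmul h c"
    have vv: "hip v v = qone" using v by (simp add: hip_self)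
    have "hip (Mv v c x) (Mv v c x) = hip x x + (qmul h (qconj a) + qmul a (qconj h) + qmul a (qconj a))"
      unfolding Mv_def a_def[symmetric] h_def[symmetric]
      by (simp add: hip_add_left hip_add_right hip_hlmul_left hip_hlmul_right vv h_def hip_sym[of v x] qmul_add_left qmul_add_right)
    then have "(norm (Mv v c x))^2 = (norm x)^2 + (qmul h (qconj a) + qmul a (qconj h) + qmul a (qconj a))$1"
      by (simp add: norm_sq_hip[of "Mv v c x"] norm_sq_hip[of x])
    also have "(qmul h (qconj a) + qmul a (qconj h) + qmul a (qconj a))$1 = 0"
      unfolding a_def Mv_extra c1 by simp
    finally show ?thesis by (simp add: power2_eq_iff_nonneg)
  qed
  show ?thesis using lin hl nm by (simp add: Sp_iff)
qed

lemma Mv_fix: "hip x v = 0 \<Longrightarrow> Mv v c x = x"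
  by (simp add: Mv_def)

lemma L_map:
  assumes p: "norm p = 1" and q: "norm q = 1"
  shows "\<exists>g\<in>Sp. g p = q \<and> (\<forall>x. hip x p = 0 \<longrightarrow> hip x q = 0 \<longrightarrow> g x = x)"
proof -
  define c where "c = hip p q"
  define lm where "lm = (if c = 0 then qone else (1 / norm c) *\<^sub>R c)"
  have nl: "norm lm = 1" by (simp add: lm_def)
  have cl: "qmul c (qconj lm) = norm c *\<^sub>R qone"
    by (cases "c = 0") (simp_all add: lm_def qconj_scaleR qmul_scaleR_right qmul_qconj_self power2_eq_square)
  have lc: "qmul lm (qconj c) = norm c *\<^sub>R qone"
    using arg_cong[OF cl, of qconj] by (simp add: qconj_qmul qconj_scaleR)
  have ll: "qmul lm (qconj lm) = qone" using nl by (simp add: qmul_qconj_self)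
  have pp: "hip p p = qone" using p by (simp add: hip_self)
  have qq: "hip q q = qone" using q by (simp add: hip_self)
  define P where "P = Mv q (qconj lm - qone)"
  have PSp: "P \<in> Sp" unfolding P_def by (rule Mv_Sp) (simp_all add: q nl)
  have Pl: "P (hlmul lm q) = q"
  proof -
    have "P (hlmul lm q) = hlmul lm q + hlmul (qmul lm (qconj lm - qone)) q"
      by (simp add: P_def Mv_def hip_hlmul_left qq)
    also have "\<dots> = hlmul lm q + hlmul (qone - lm) q"
      by (simp add: qmul_diff_right ll)
    also have "\<dots> = hlmul (lm + (qone - lm)) q"
      by (simp only: hlmul_add_left)
    finally show ?thesis by simp
  qed
  have Pfix: "hip x q = 0 \<Longrightarrow> P x = x" for x by (simp add: P_def Mv_fix)
  show ?thesis
  proof (cases "p = hlmul lm q")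
    case True
    show ?thesis using PSp Pl Pfix True by blast
  next
    case False
    define d where "d = p - hlmul lm q"
    define N where "N = norm d"
    have Npos: "N > 0" using False by (simp add: N_def d_def)
    define v where "v = (1/N) *\<^sub>R d"
    have nv: "norm v = 1" using Npos by (simp add: v_def N_def)
    have hpd: "hip p d = (1 - norm c) *\<^sub>R qone"
      by (simp add: d_def hip_diff_right hip_hlmul_right pp c_def[symmetric] cl algebra_simps)
    have hld: "hip (hlmul lm q) d = (norm c - 1) *\<^sub>R qone"
    proof -
      have "hip q p = qconj c" by (simp add: c_def hip_sym[of q p])
      then show ?thesis
        by (simp add: d_def hip_hlmul_left hip_diff_right hip_hlmul_right qq qmul_diff_right lc ll algebra_simps)
    qed
    have hdd: "hip d d = ((1 - norm c) - (norm c - 1)) *\<^sub>R qone"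
    proof -
      have "hip d d = hip p d - hip (hlmul lm q) d" by (simp add: d_def hip_diff_left)
      then show ?thesis using hpd hld by (simp only: scaleR_left_diff_distrib)
    qed
    have N2: "N^2 = 2 * (1 - norm c)"
      using hdd by (simp add: N_def norm_sq_hip[of d])
    define R where "R = Mv v (- 2 *\<^sub>R qone)"
    have RSp: "R \<in> Sp" unfolding R_def
    proof (rule Mv_Sp)
      show "norm v = 1" by (rule nv)
      have "qone + - 2 *\<^sub>R qone = - (qone::real^4)" by (simp add: vec4_eq)
      then show "norm (qone + - 2 *\<^sub>R qone) = 1" by (metis norm_minus_cancel norm_qone)
    qed
    have Rp: "R p = hlmul lm q"
    proof -
      have "R p = p + hlmul (qmul (hip p v) (- 2 *\<^sub>R qone)) v" by (simp add: R_def Mv_def)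
      also have "qmul (hip p v) (- 2 *\<^sub>R qone) = (- 2 * (1 - norm c) / N) *\<^sub>R qone"
        using Npos by (simp add: v_def hip_scaleR_right hpd vec4_eq qmul_comp field_simps)
      also have "hlmul ((- 2 * (1 - norm c) / N) *\<^sub>R qone) v = (- 2 * (1 - norm c) / N^2) *\<^sub>R d"
        by (simp add: hlmul_scaleR_left hlmul_scaleR_right v_def power2_eq_square)
      also have "(- 2 * (1 - norm c) / N^2) = -1"
      proof -
        have nz: "N^2 \<noteq> 0" using Npos by simp
        have e: "- 2 * (1 - norm c) = - (N^2)" using N2 by simp
        show ?thesis unfolding e using nz by simp
      qed
      finally show ?thesis by (simp add: d_def)
    qed
    have Rfix: "hip x p = 0 \<Longrightarrow> hip x q = 0 \<Longrightarrow> R x = x" for x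
    proof -
      assume a: "hip x p = 0" "hip x q = 0"
      have "hip x v = 0" using a by (simp add: v_def d_def hip_scaleR_right hip_diff_right hip_hlmul_right)
      then show "R x = x" by (simp add: R_def Mv_fix)
    qed
    show ?thesis
    proof (intro bexI conjI allI impI)
      show "(P \<circ> R) \<in> Sp" using PSp RSp by (rule Sp_comp)
      show "(P \<circ> R) p = q" by (simp add: Rp Pl)
      show "(P \<circ> R) x = x" if "hip x p = 0" "hip x q = 0" for x
        using that by (simp add: Rfix Pfix)
    qed
  qed
qed

lemma W_pair:
  assumes u0: "norm u0 = 1" and w0: "norm w0 = 1" and p: "norm p = 1" and q: "norm q = 1"
    and pq: "hip p q = hip u0 w0" and small: "norm (hip u0 w0) < 1"
  shows "\<exists>f\<in>Sp. f u0 = p \<and> f w0 = q"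
proof -
  obtain g1 where g1: "g1 \<in> Sp" "g1 u0 = p" using L_map[OF u0 p] by blast
  define w1 where "w1 = g1 w0"
  define k where "k = qconj (hip u0 w0)"
  have nw1: "norm w1 = 1" using g1 w0 by (simp add: w1_def Sp_norm)
  have w1p: "hip w1 p = k"
    using Sp_hip[OF g1(1), of w0 u0] g1(2) by (simp add: w1_def k_def hip_sym[of w0 u0])
  have qp: "hip q p = k" using pq by (simp add: k_def hip_sym[of q p])
  have pp: "hip p p = qone" using p by (simp add: hip_self)
  have w1w1: "hip w1 w1 = qone" using nw1 by (simp add: hip_self)
  have qq: "hip q q = qone" using q by (simp add: hip_self)
  define a where "a = w1 - hlmul k p"
  define b where "b = q - hlmul k p"
  have ap: "hip a p = 0" by (simp add: a_def hip_diff_left hip_hlmul_left w1p pp)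
  have bp: "hip b p = 0" by (simp add: b_def hip_diff_left hip_hlmul_left qp pp)
  have kk: "qmul k (qconj k) = (norm k)^2 *\<^sub>R qone" by (rule qmul_qconj_self)
  have aa: "hip a a = qone - (norm k)^2 *\<^sub>R qone"
  proof -
    have "hip (hlmul k p) a = 0" using ap by (simp add: hip_hlmul_left hip_sym[of p a])
    moreover have "hip w1 a = qone - (norm k)^2 *\<^sub>R qone"
      by (simp add: a_def hip_diff_right hip_hlmul_right w1w1 w1p kk)
    ultimately show ?thesis by (simp add: a_def hip_diff_left)
  qed
  have bb: "hip b b = qone - (norm k)^2 *\<^sub>R qone"
  proof -
    have "hip (hlmul k p) b = 0" using bp by (simp add: hip_hlmul_left hip_sym[of p b])
    moreover have "hip q b = qone - (norm k)^2 *\<^sub>R qone"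
      by (simp add: b_def hip_diff_right hip_hlmul_right qq qp kk)
    ultimately show ?thesis by (simp add: b_def hip_diff_left)
  qed
  have nk: "norm k < 1" using small by (simp add: k_def)
  then have nk2: "(norm k)^2 < 1" by (simp add: power_less_one_iff abs_less_iff)
  have na2: "(norm a)^2 = 1 - (norm k)^2" using aa by (simp add: norm_sq_hip[of a])
  have nb2: "(norm b)^2 = 1 - (norm k)^2" using bb by (simp add: norm_sq_hip[of b])
  have nab: "norm a = norm b" using na2 nb2 power2_eq_iff_nonneg[of "norm a" "norm b"] by simp
  define s where "s = norm a"
  have spos: "s > 0" proof - have "(norm a)^2 > 0" using na2 nk2 by simp then show ?thesis by (simp add: s_def) qed
  define ah where "ah = (1/s) *\<^sub>R a"
  define bh where "bh = (1/s) *\<^sub>R b"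
  have nah: "norm ah = 1" using spos by (simp add: ah_def s_def)
  have nbh: "norm bh = 1" using spos nab by (simp add: bh_def s_def)
  obtain g2 where g2: "g2 \<in> Sp" "g2 ah = bh" "\<And>x. hip x ah = 0 \<Longrightarrow> hip x bh = 0 \<Longrightarrow> g2 x = x"
    using L_map[OF nah nbh] by blast
  have g2p: "g2 p = p"
  proof (rule g2(3))
    show "hip p ah = 0" using ap by (simp add: ah_def hip_scaleR_right hip_sym[of p a])
    show "hip p bh = 0" using bp by (simp add: bh_def hip_scaleR_right hip_sym[of p b])
  qed
  have lin2: "linear g2" using g2(1) by (rule Sp_linear)
  have g2a: "g2 a = b"
  proof -
    have "a = s *\<^sub>R ah" using spos by (simp add: ah_def)
    then have "g2 a = s *\<^sub>R g2 ah" using linear_scale[OF lin2] by metis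
    also have "\<dots> = b" using spos by (simp add: g2(2) bh_def)
    finally show ?thesis .
  qed
  have "g2 w1 = q"
  proof -
    have "w1 = a + hlmul k p" by (simp add: a_def)
    then have "g2 w1 = g2 a + hlmul k (g2 p)"
      using linear_add[OF lin2] Sp_hlmul[OF g2(1)] by metis
    then show ?thesis by (simp add: g2a g2p b_def)
  qed
  then show ?thesis using Sp_comp[OF g2(1) g1(1)] g1(2) g2p by (intro bexI[of _ "g2 \<circ> g1"]) (auto simp: w1_def)
qed

lemma perp_exists:
  assumes n3: "CARD('n) \<ge> 3"
  shows "\<exists>e::real^4^'n. norm e = 1 \<and> hip e x = 0 \<and> hip e y = 0"
proof -
  define T where "T = (\<lambda>e::real^4^'n. (hip e x, hip e y))"
  have lin: "linear T"
    by (rule linearI) (simp_all add: T_def hip_add_left hip_scaleR_left)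
  have "\<exists>e. e \<noteq> 0 \<and> T e = 0"
  proof (rule ccontr)
    assume "\<not> ?thesis"
    then have "inj T" using linear_inj_iff_eq_0[OF lin] by blast
    then have "dim (T ` UNIV) = dim (UNIV :: (real^4^'n) set)"
      using dim_image_eq[OF lin] by (metis inj_on_subset subset_UNIV)
    moreover have "dim (T ` UNIV) \<le> DIM((real^4) \<times> (real^4))" by (rule dim_subset_UNIV)
    moreover have "dim (UNIV :: (real^4^'n) set) = CARD('n) * 4" by simp
    ultimately show False using n3 by simp
  qed
  then obtain e where e: "e \<noteq> 0" "T e = 0" by blast
  show ?thesis
  proof (intro exI conjI)
    show "norm ((1/norm e) *\<^sub>R e) = 1" using e by simp
    show "hip ((1/norm e) *\<^sub>R e) x = 0" using e by (simp add: T_def hip_scaleR_left zero_prod_def)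
    show "hip ((1/norm e) *\<^sub>R e) y = 0" using e by (simp add: T_def hip_scaleR_left zero_prod_def)
  qed
qed

definition conn :: "(real^4^'n) set set \<Rightarrow> real^4^'n \<Rightarrow> real^4^'n \<Rightarrow> bool" where
  "conn G x y \<longleftrightarrow> (\<exists>Ws. Ws \<noteq> [] \<and> set Ws \<subseteq> G \<and> x \<in> hd Ws \<and> y \<in> last Ws \<and>
        (\<forall>i. Suc i < length Ws \<longrightarrow> dim (Ws!i \<inter> Ws!Suc i) > 0))"

lemma dim_pos: "(y::real^4^'n) \<in> S \<Longrightarrow> y \<noteq> 0 \<Longrightarrow> dim S > 0"
  using dim_subset[of "{y}" S] by simp

lemma conn_single: "P \<in> G \<Longrightarrow> x \<in> P \<Longrightarrow> y \<in> P \<Longrightarrow> conn G x y"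
  unfolding conn_def by (intro exI[of _ "[P]"]) simp

lemma conn_trans:
  assumes "conn G x y" "conn G y z" "y \<noteq> 0" shows "conn G x z"
proof -
  obtain A where A: "A \<noteq> []" "set A \<subseteq> G" "x \<in> hd A" "y \<in> last A"
    "\<forall>i. Suc i < length A \<longrightarrow> 0 < dim (A!i \<inter> A!Suc i)"
    using assms(1) unfolding conn_def by blast
  obtain B where B: "B \<noteq> []" "set B \<subseteq> G" "y \<in> hd B" "z \<in> last B"
    "\<forall>i. Suc i < length B \<longrightarrow> 0 < dim (B!i \<inter> B!Suc i)"
    using assms(2) unfolding conn_def by blast
  show ?thesis unfolding conn_def
  proof (intro exI[of _ "A @ B"] conjI allI impI)
    show "A @ B \<noteq> []" using A by simp
    show "set (A@B) \<subseteq> G" using A B by simp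
    show "x \<in> hd (A@B)" using A by simp
    show "z \<in> last (A@B)" using B by simp
    fix i assume i: "Suc i < length (A@B)"
    show "0 < dim ((A@B)!i \<inter> (A@B)!Suc i)"
    proof (cases "Suc i < length A")
      case True then show ?thesis using A(5) by (simp add: nth_append)
    next
      case False
      show ?thesis
      proof (cases "i < length A")
        case True
        then have ii: "i = length A - 1" using False by simp
        have "(A@B)!i = last A" using A(1) True by (simp add: nth_append ii last_conv_nth)
        moreover have "(A@B)!Suc i = hd B" using A(1) B(1) ii by (simp add: nth_append hd_conv_nth)
        ultimately show ?thesis using A(4) B(3) assms(3) dim_pos by (metis IntI)
      next
        case False
        then obtain j where j: "i = length A + j" by (metis le_iff_add not_less)
        have "(A@B)!i = B!j" "(A@B)!Suc i = B!Suc j" using j by (simp_all add: nth_append)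
        moreover have "Suc j < length B" using i j by simp
        ultimately show ?thesis using B(5) by simp
      qed
    qed
  qed
qed

lemma conn_via: "P1 \<in> G \<Longrightarrow> P2 \<in> G \<Longrightarrow> x \<in> P1 \<Longrightarrow> z \<in> P1 \<Longrightarrow> z \<in> P2 \<Longrightarrow> y \<in> P2 \<Longrightarrow> z \<noteq> 0
  \<Longrightarrow> conn G x y"
  by (metis conn_single conn_trans)

lemma hrmul_linear: "linear (\<lambda>x. hrmul x q)"
  by (rule linearI) (simp_all add: hrmul_def vec_eq_iff qmul_add_left qmul_scaleR_left)

lemma orbit_subspace: "subspace W \<Longrightarrow> P \<in> orbit_SpSp1 W \<Longrightarrow> subspace P"
  unfolding orbit_SpSp1_def
  by (auto intro!: linear_subspace_image Sp_linear hrmul_linear)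

lemma orbit_mem: "f \<in> Sp \<Longrightarrow> f ` W \<in> orbit_SpSp1 W"
proof -
  assume f: "f \<in> Sp"
  have "(\<lambda>x. hrmul x qone) ` W = W" by (simp add: hrmul_def)
  then show ?thesis using f unfolding orbit_SpSp1_def by (intro CollectI exI[of _ f] exI[of _ qone]) auto
qed

lemma orth2:
  assumes "norm x = 1" "norm y = 1" "hip x y = 0"
  shows "hip (a *\<^sub>R x + b *\<^sub>R y) (c *\<^sub>R x + d *\<^sub>R y) = (a*c + b*d) *\<^sub>R qone"
proof -
  have "hip y x = 0" using assms(3) by (simp add: hip_sym[of y x])
  then show ?thesis using assms
    by (simp add: hip_add_left hip_add_right hip_scaleR_left hip_scaleR_right hip_self scaleR_add_left mult.commute)
qed

lemma norm_from_hip: "hip x x = qone \<Longrightarrow> norm x = 1"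
  using norm_sq_hip[of x] power2_eq_iff_nonneg[of "norm x" 1] by simp

lemma adj:
  assumes u0: "norm u0 = 1" "u0 \<in> W" and w0: "norm w0 = 1" "w0 \<in> W"
    and small: "norm (hip u0 w0) < 1"
    and p: "norm p = 1" and q: "norm q = 1" and pq: "hip p q = hip u0 w0"
  shows "\<exists>P\<in>orbit_SpSp1 W. p \<in> P \<and> q \<in> P"
proof -
  obtain f where f: "f \<in> Sp" "f u0 = p" "f w0 = q"
    using W_pair[OF u0(1) w0(1) p q pq small] by blast
  show ?thesis using orbit_mem[OF f(1), of W] f u0 w0 by blast
qed




lemma step:
  fixes x y :: "real^4^'n"
  assumes n3: "CARD('n) \<ge> 3" and u0: "norm u0 = 1" "u0 \<in> W" and w0: "norm w0 = 1" "w0 \<in> W"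
    and small: "norm (hip u0 w0) < 1"
    and x: "norm x = 1" and y: "norm y = 1" and xy: "hip x y = 0"
    and th1: "0 < 1 + cos \<theta>" and th2: "2 * (norm (hip u0 w0))^2 \<le> 1 + cos \<theta>"
  shows "conn (orbit_SpSp1 W) x (cos \<theta> *\<^sub>R x + sin \<theta> *\<^sub>R y)"
proof -
  define io where "io = hip u0 w0"
  define k where "k = qconj io"
  obtain e3 :: "real^4^'n" where e3: "norm e3 = 1" "hip e3 x = 0" "hip e3 y = 0"
    using perp_exists[OF n3] by blast
  have hxe: "hip x e3 = 0" using e3(2) by (simp add: hip_sym[of x e3])
  have hye: "hip y e3 = 0" using e3(3) by (simp add: hip_sym[of y e3])
  have yx: "hip y x = 0" using xy by (simp add: hip_sym[of y x])
  have xx: "hip x x = qone" using x by (simp add: hip_self)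
  have yy: "hip y y = qone" using y by (simp add: hip_self)
  have ee: "hip e3 e3 = qone" using e3 by (simp add: hip_self)
  define t where "t = sin \<theta> / (1 + cos \<theta>)"
  have sc: "(sin \<theta>)^2 = (1 - cos \<theta>) * (1 + cos \<theta>)"
    by (simp add: sin_squared_eq algebra_simps power2_eq_square)
  have tt: "1 + t^2 = 2 / (1 + cos \<theta>)"
  proof -
    have "t^2 = (sin \<theta>)^2 / (1 + cos \<theta>)^2" by (simp add: t_def power_divide)
    also have "\<dots> = (1 - cos \<theta>) / (1 + cos \<theta>)" using th1 by (subst sc) (simp add: power2_eq_square)
    finally show ?thesis using th1 by (simp add: field_simps)
  qed
  have ts: "cos \<theta> + sin \<theta> * t = 1"
  proof -
    have "sin \<theta> * t = (sin \<theta>)^2 / (1 + cos \<theta>)" by (simp add: t_def power2_eq_square)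
    also have "\<dots> = 1 - cos \<theta>" using th1 by (simp add: sc)
    finally show ?thesis by simp
  qed
  define cc where "cc = 1 - (norm io)^2 * (1 + t^2)"
  have cc0: "cc \<ge> 0"
  proof -
    have "(norm io)^2 * (1 + t^2) = 2 * (norm io)^2 / (1 + cos \<theta>)" by (simp add: tt)
    also have "\<dots> \<le> 1" using th1 th2 by (simp add: io_def)
    finally show ?thesis by (simp add: cc_def)
  qed
  define c where "c = sqrt cc"
  have c2: "c * c = cc" using cc0 by (simp add: c_def)
  define z where "z = hlmul k x + hlmul (t *\<^sub>R k) y + c *\<^sub>R e3"
  have hxz: "hip x z = io"
    by (simp add: z_def k_def hip_add_right hip_hlmul_right hip_scaleR_right xx xy hxe)
  have hyz: "hip y z = t *\<^sub>R io"
    by (simp add: z_def k_def hip_add_right hip_hlmul_right hip_scaleR_right yy yx hye qconj_scaleR)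
  have hez: "hip e3 z = c *\<^sub>R qone"
    by (simp add: z_def hip_add_right hip_hlmul_right hip_scaleR_right e3 ee)
  have kio: "qmul k io = (norm io)^2 *\<^sub>R qone" by (simp add: k_def qmul_qconj_self')
  have "hip z z = qmul k (hip x z) + qmul (t *\<^sub>R k) (hip y z) + c *\<^sub>R hip e3 z"
    by (simp add: z_def hip_add_left hip_hlmul_left hip_scaleR_left)
  also have "\<dots> = ((norm io)^2 + t * t * (norm io)^2 + c * c) *\<^sub>R qone"
    by (simp add: hxz hyz hez qmul_scaleR_left qmul_scaleR_right kio scaleR_add_left)
  also have "(norm io)^2 + t * t * (norm io)^2 + c * c = 1"
    by (simp add: c2 cc_def algebra_simps power2_eq_square)
  finally have nz: "norm z = 1" by (simp add: norm_from_hip)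
  define x1 where "x1 = cos \<theta> *\<^sub>R x + sin \<theta> *\<^sub>R y"
  have "hip x1 x1 = (cos \<theta> * cos \<theta> + sin \<theta> * sin \<theta>) *\<^sub>R qone"
    unfolding x1_def by (rule orth2[OF x y xy])
  then have nx1: "norm x1 = 1" by (simp add: norm_from_hip flip: power2_eq_square)
  have "hip x1 z = (cos \<theta> + sin \<theta> * t) *\<^sub>R io"
    by (simp add: x1_def hip_add_left hip_scaleR_left hxz hyz scaleR_add_left)
  then have hx1z: "hip x1 z = io" by (simp add: ts)
  obtain P1 where P1: "P1 \<in> orbit_SpSp1 W" "x \<in> P1" "z \<in> P1"
    using adj[OF u0 w0 small x nz] hxz by (auto simp: io_def)
  obtain P2 where P2: "P2 \<in> orbit_SpSp1 W" "x1 \<in> P2" "z \<in> P2"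
    using adj[OF u0 w0 small nx1 nz] hx1z by (auto simp: io_def)
  have "z \<noteq> 0" using nz by auto
  then show ?thesis using conn_via[OF P1(1) P2(1) P1(2) P1(3) P2(3) P2(2)] by (simp add: x1_def)
qed


lemma iter:
  fixes x y :: "real^4^'n"
  assumes n3: "CARD('n) \<ge> 3" and u0: "norm u0 = 1" "u0 \<in> W" and w0: "norm w0 = 1" "w0 \<in> W"
    and small: "norm (hip u0 w0) < 1"
    and x: "norm x = 1" and y: "norm y = 1" and xy: "hip x y = 0"
    and th1: "0 < 1 + cos \<theta>" and th2: "2 * (norm (hip u0 w0))^2 \<le> 1 + cos \<theta>"
  shows "conn (orbit_SpSp1 W) x (cos (real (Suc m) * \<theta>) *\<^sub>R x + sin (real (Suc m) * \<theta>) *\<^sub>R y)"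
proof (induction m)
  case 0
  then show ?case using step[OF n3 u0 w0 small x y xy th1 th2] by simp
next
  case (Suc m)
  define a where "a = real (Suc m) * \<theta>"
  define xa where "xa = cos a *\<^sub>R x + sin a *\<^sub>R y"
  define xb where "xb = (- sin a) *\<^sub>R x + cos a *\<^sub>R y"
  have "hip xa xa = (cos a * cos a + sin a * sin a) *\<^sub>R qone"
    unfolding xa_def by (rule orth2[OF x y xy])
  then have nxa: "norm xa = 1" by (simp add: norm_from_hip flip: power2_eq_square)
  have "hip xb xb = ((- sin a) * (- sin a) + cos a * cos a) *\<^sub>R qone"
    unfolding xb_def by (rule orth2[OF x y xy])
  then have nxb: "norm xb = 1" by (simp add: norm_from_hip flip: power2_eq_square)
  have "hip xa xb = (cos a * (- sin a) + sin a * cos a) *\<^sub>R qone"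
    unfolding xa_def xb_def by (rule orth2[OF x y xy])
  then have hab: "hip xa xb = 0" by simp
  have c1: "conn (orbit_SpSp1 W) xa (cos \<theta> *\<^sub>R xa + sin \<theta> *\<^sub>R xb)"
    by (rule step[OF n3 u0 w0 small nxa nxb hab th1 th2])
  have e: "cos \<theta> *\<^sub>R xa + sin \<theta> *\<^sub>R xb
      = cos (real (Suc (Suc m)) * \<theta>) *\<^sub>R x + sin (real (Suc (Suc m)) * \<theta>) *\<^sub>R y"
  proof -
    have r: "real (Suc (Suc m)) * \<theta> = a + \<theta>" by (simp add: a_def algebra_simps)
    show ?thesis unfolding r cos_add sin_add xa_def xb_def
      by (simp add: scaleR_add_right scaleR_add_left scaleR_diff_left algebra_simps)
  qed
  have "xa \<noteq> 0" using nxa by auto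
  moreover have "conn (orbit_SpSp1 W) x xa" using Suc by (simp add: xa_def a_def)
  ultimately show ?case using conn_trans[OF _ c1] e by simp
qed

lemma orth_conn:
  fixes x y :: "real^4^'n"
  assumes n3: "CARD('n) \<ge> 3" and u0: "norm u0 = 1" "u0 \<in> W" and w0: "norm w0 = 1" "w0 \<in> W"
    and small: "norm (hip u0 w0) < 1"
    and x: "norm x = 1" and y: "norm y = 1" and xy: "hip x y = 0"
  shows "conn (orbit_SpSp1 W) x y"
proof -
  define r where "r = norm (hip u0 w0)"
  have r0: "0 \<le> r" "r < 1" using small by (simp_all add: r_def)
  have r2: "r^2 < 1" using r0 by (simp add: power_less_one_iff abs_less_iff)
  define y0 where "y0 = 2 * r^2 - 1"
  have y0: "-1 \<le> y0" "y0 < 1" using r2 by (simp_all add: y0_def)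
  define t0 where "t0 = arccos y0"
  have t0: "0 \<le> t0" "t0 \<le> pi" "cos t0 = y0"
    using y0 by (simp_all add: t0_def arccos_lbound arccos_ubound)
  have t0pos: "0 < t0" using t0 y0 by (metis cos_zero less_eq_real_def less_irrefl)
  obtain N :: nat where N: "pi / (2 * t0) < real N" using reals_Archimedean2 by blast
  have Npos: "0 < real N" using N t0pos pi_gt_zero
    by (smt (verit, best) divide_pos_pos)
  define th where "th = pi / 2 / real N"
  have thpos: "0 < th" using Npos by (simp add: th_def)
  have thle: "th \<le> t0"
  proof -
    have "pi < real N * (2 * t0)" using N t0pos by (simp add: divide_less_eq)
    then show ?thesis using Npos by (simp add: th_def divide_le_eq algebra_simps)
  qed
  have thpi2: "th \<le> pi / 2" using Npos by (simp add: th_def divide_le_eq)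
  have cge: "y0 \<le> cos th" using cos_monotone_0_pi_le[of th t0] thpos thle t0 by simp
  have th1: "0 < 1 + cos th" using cos_ge_zero[of th] thpos thpi2 by simp
  have th2: "2 * (norm (hip u0 w0))^2 \<le> 1 + cos th" using cge by (simp add: y0_def r_def)
  obtain m where m: "N = Suc m" using Npos by (metis gr0_implies_Suc of_nat_0_less_iff)
  have "real (Suc m) * th = pi / 2" using Npos unfolding th_def m by (simp add: field_simps)
  then show ?thesis using iter[OF n3 u0 w0 small x y xy th1 th2, of m] by (simp only:) simp
qed

lemma conn_scale:
  assumes sub: "\<forall>P\<in>G. subspace P" and c: "conn G x y"
  shows "conn G (a *\<^sub>R x) (b *\<^sub>R y)"
proof -
  obtain Ws where Ws: "Ws \<noteq> []" "set Ws \<subseteq> G" "x \<in> hd Ws" "y \<in> last Ws"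
    "\<forall>i. Suc i < length Ws \<longrightarrow> dim (Ws!i \<inter> Ws!Suc i) > 0"
    using c unfolding conn_def by blast
  have "hd Ws \<in> G" "last Ws \<in> G" using Ws(1,2) by auto
  then have "subspace (hd Ws)" "subspace (last Ws)" using sub by auto
  then have "a *\<^sub>R x \<in> hd Ws" "b *\<^sub>R y \<in> last Ws" using Ws(3,4) by (simp_all add: subspace_scale)
  then show ?thesis unfolding conn_def using Ws by blast
qed

lemma small_ip:
  fixes W :: "(real^4^'n) set"
  assumes u0: "norm u0 = 1" and w0: "norm w0 = 1" and sp: "W \<subseteq> span {u0, w0}"
    and nl: "\<not> (\<exists>L. quaternion_line L \<and> W \<subseteq> L)"
  shows "norm (hip u0 w0) < 1"
proof (rule ccontr)
  assume a: "\<not> ?thesis"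
  define k where "k = hip w0 u0"
  have nk: "norm k = norm (hip u0 w0)" by (simp add: k_def hip_sym[of w0 u0])
  define r where "r = w0 - hlmul k u0"
  have uu: "hip u0 u0 = qone" using u0 by (simp add: hip_self)
  have ww: "hip w0 w0 = qone" using w0 by (simp add: hip_self)
  have ru: "hip r u0 = 0" by (simp add: r_def hip_diff_left hip_hlmul_left uu k_def)
  have "hip (hlmul k u0) r = 0" using ru by (simp add: hip_hlmul_left hip_sym[of u0 r])
  moreover have "hip w0 r = qone - (norm k)^2 *\<^sub>R qone"
    by (simp add: r_def hip_diff_right hip_hlmul_right ww k_def[symmetric] qmul_qconj_self)
  ultimately have rr: "hip r r = qone - (norm k)^2 *\<^sub>R qone"
    by (simp add: r_def hip_diff_left)
  have "(norm r)^2 = 1 - (norm k)^2" using rr by (simp add: norm_sq_hip[of r])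
  then have "(norm k)^2 \<le> 1" by (metis diff_ge_0_iff_ge zero_le_power2)
  then have "norm k \<le> 1" by (simp add: power_le_one_iff abs_le_iff)
  then have "norm k = 1" using a nk by simp
  then have "(norm r)^2 = 0" using \<open>(norm r)^2 = 1 - (norm k)^2\<close> by simp
  then have "r = 0" by simp
  then have w0e: "w0 = hlmul k u0" by (simp add: r_def)
  define L where "L = {hlmul l u0 | l. True}"
  have subL: "subspace L"
    unfolding subspace_def L_def
  proof (intro conjI ballI allI)
    show "0 \<in> {hlmul l u0 |l. True}" by (rule CollectI, rule exI[of _ 0]) simp
    fix x y assume "x \<in> {hlmul l u0 |l. True}" "y \<in> {hlmul l u0 |l. True}"
    then obtain l1 l2 where "x = hlmul l1 u0" "y = hlmul l2 u0" by blast
    then show "x + y \<in> {hlmul l u0 |l. True}" by (auto simp: hlmul_add_left[symmetric])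
  next
    fix c :: real and x assume "x \<in> {hlmul l u0 |l. True}"
    then obtain l1 where "x = hlmul l1 u0" by blast
    then show "c *\<^sub>R x \<in> {hlmul l u0 |l. True}" by (auto simp: hlmul_scaleR_left[symmetric])
  qed
  have "u0 \<in> L" unfolding L_def by (rule CollectI, rule exI[of _ qone]) simp
  moreover have "w0 \<in> L" unfolding L_def w0e by (rule CollectI, rule exI[of _ k]) simp
  ultimately have "{u0, w0} \<subseteq> L" by simp
  then have "span {u0, w0} \<subseteq> L" using subL by (rule span_minimal)
  moreover have "quaternion_line L" unfolding quaternion_line_def L_def
  proof (intro exI[of _ u0] conjI)
    show "u0 \<noteq> 0" using u0 by auto
  qed simp
  ultimately show False using nl sp by blast
qed

theorem proposition11p9:
  fixes W :: "(real^4^'n) set"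
  assumes "CARD('n) \<ge> 3"
    and "real_plane W"
    and "\<not> (\<exists>L. quaternion_line L \<and> W \<subseteq> L)"
  shows "transitivity_property (orbit_SpSp1 W)"
proof -
  note n3 = assms(1)
  have subW: "subspace W" and dW: "dim W = 2" using assms(2) by (simp_all add: real_plane_def)
  obtain B where B: "B \<subseteq> W" "\<And>x. x \<in> B \<Longrightarrow> norm x = 1" "card B = dim W" "span B = W"
    using orthonormal_basis_subspace[OF subW] by metis
  obtain u0 w0 where uw: "B = {u0, w0}" using B(3) dW card_2_iff by metis
  have u0: "norm u0 = 1" "u0 \<in> W" and w0: "norm w0 = 1" "w0 \<in> W" using B uw by auto
  have small: "norm (hip u0 w0) < 1"
    using small_ip[OF u0(1) w0(1) _ assms(3)] B(4) uw by simp
  define G where "G = orbit_SpSp1 W"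
  have sub: "\<forall>P\<in>G. subspace P" using orbit_subspace[OF subW] by (simp add: G_def)
  have plane: "\<exists>P\<in>G. v \<in> P \<and> 0 \<in> P" for v :: "real^4^'n"
  proof (cases "v = 0")
    case True
    have "W \<in> G" using orbit_mem[OF Sp_id, of W] by (simp add: G_def)
    then show ?thesis using True subspace_0[OF subW] by blast
  next
    case False
    define vh where "vh = (1 / norm v) *\<^sub>R v"
    have "norm vh = 1" using False by (simp add: vh_def)
    then obtain f where f: "f \<in> Sp" "f u0 = vh" using L_map[OF u0(1)] by blast
    have "f (norm v *\<^sub>R u0) = v"
      using linear_scale[OF Sp_linear[OF f(1)]] f(2) False by (simp add: vh_def)
    moreover have "norm v *\<^sub>R u0 \<in> W" using subW u0 by (simp add: subspace_scale)
    moreover have "f 0 = 0" using linear_0[OF Sp_linear[OF f(1)]] .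
    ultimately show ?thesis using orbit_mem[OF f(1), of W] subW subspace_0[OF subW]
      unfolding G_def by (metis image_eqI)
  qed
  have "conn G x y" for x y
  proof (cases "x = 0 \<or> y = 0")
    case True
    then show ?thesis
    proof
      assume "x = 0" then show ?thesis using plane[of y] conn_single by metis
    next
      assume "y = 0" then show ?thesis using plane[of x] conn_single by metis
    qed
  next
    case False
    define xh where "xh = (1 / norm x) *\<^sub>R x"
    define yh where "yh = (1 / norm y) *\<^sub>R y"
    have nx: "norm xh = 1" "norm yh = 1" using False by (simp_all add: xh_def yh_def)
    obtain e :: "real^4^'n" where e: "norm e = 1" "hip e xh = 0" "hip e yh = 0"
      using perp_exists[OF n3] by blast
    have xe: "hip xh e = 0" using e(2) by (simp add: hip_sym[of xh e])
    have c1: "conn G xh e" unfolding G_def by (rule orth_conn[OF n3 u0 w0 small nx(1) e(1) xe])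
    have c2: "conn G e yh" unfolding G_def by (rule orth_conn[OF n3 u0 w0 small e(1) nx(2) e(3)])
    have "e \<noteq> 0" using e by auto
    then have "conn G xh yh" using conn_trans[OF c1 c2] by simp
    then have "conn G (norm x *\<^sub>R xh) (norm y *\<^sub>R yh)" using conn_scale[OF sub] by blast
    then show ?thesis using False by (simp add: xh_def yh_def)
  qed
  then show ?thesis unfolding transitivity_property_def G_def conn_def by blast
qed

end
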